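(* Let $G_1,G_2,G_3$ be graphs on the same vertex set $Y$ with $|Y|\ge8$, each of minimum degree at least $2$, such that there are no pairwise disjoint edges $e_1,e_2,e_3$ with $e_i\in E(G_i)$ for $i=1,2,3$. Then there are two vertices $a,b\in Y$ such that every edge of each $G_i$ contains $a$ or $b$. *)

theory Defs
  imports Main
begin

definition graph_on :: "'a set \<Rightarrow> 'a set set \<Rightarrow> bool" where
  "graph_on Y E \<longleftrightarrow> (\<forall>e\<in>E. e \<subseteq> Y \<and> card e = 2)"

definition degree :: "'a set set \<Rightarrow> 'a \<Rightarrow> nat" where
  "degree E v = card {e\<in>E. v \<in> e}"

definition min_degree_ge :: "'a set \<Rightarrow> 'a set set \<Rightarrow> nat \<Rightarrow> bool" where
  "min_degree_ge Y E k \<longleftrightarrow> (\<forall>v\<in>Y. degree E v \<ge> k)"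

end

theory Submission
  imports Defs
begin

locale tri =
  fixes Y :: "'a set" and A B C :: "'a set set"
  assumes fin: "finite Y" and card8: "8 \<le> card Y"
    and eA: "{u,v} \<in> A \<Longrightarrow> u \<noteq> v \<and> u \<in> Y \<and> v \<in> Y"
    and eB: "{u,v} \<in> B \<Longrightarrow> u \<noteq> v \<and> u \<in> Y \<and> v \<in> Y"
    and eC: "{u,v} \<in> C \<Longrightarrow> u \<noteq> v \<and> u \<in> Y \<and> v \<in> Y"
    and dA: "v \<in> Y \<Longrightarrow> \<exists>u w. u \<noteq> w \<and> {v,u} \<in> A \<and> {v,w} \<in> A"
    and dB: "v \<in> Y \<Longrightarrow> \<exists>u w. u \<noteq> w \<and> {v,u} \<in> B \<and> {v,w} \<in> B"
    and dC: "v \<in> Y \<Longrightarrow> \<exists>u w. u \<noteq> w \<and> {v,u} \<in> C \<and> {v,w} \<in> C"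
    and rf: "{a,b} \<in> A \<Longrightarrow> {c,d} \<in> B \<Longrightarrow> {p,q} \<in> C \<Longrightarrow>
             a \<in> {c,d,p,q} \<or> b \<in> {c,d,p,q} \<or> c \<in> {p,q} \<or> d \<in> {p,q}"
begin

lemma fresh: "length xs < 8 \<Longrightarrow> \<exists>x\<in>Y. x \<notin> set xs"
proof (rule ccontr)
  assume h: "length xs < 8" "\<not> (\<exists>x\<in>Y. x \<notin> set xs)"
  then have "Y \<subseteq> set xs" by auto
  then have "card Y \<le> card (set xs)" by (simp add: card_mono)
  also have "\<dots> \<le> length xs" by (rule card_length)
  finally show False using h card8 by linarith
qed

lemma swapAB: "tri Y B A C"
proof
  fix a b c d p q assume h: "{a,b} \<in> B" "{c,d} \<in> A" "{p,q} \<in> C"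
  have "c \<in> {a,b,p,q} \<or> d \<in> {a,b,p,q} \<or> a \<in> {p,q} \<or> b \<in> {p,q}" using rf[OF h(2,1,3)] .
  then show "a \<in> {c,d,p,q} \<or> b \<in> {c,d,p,q} \<or> c \<in> {p,q} \<or> d \<in> {p,q}" by auto
qed (use fin card8 eA eB eC dA dB dC in auto)


lemma p1:
  assumes e1: "{x1,y1} \<in> A" and e2: "{x2,y2} \<in> B" and dis: "x1 \<notin> {x2,y2}" "y1 \<notin> {x2,y2}"
    and r: "r \<notin> {x1,y1,x2,y2}" and rt: "{r,t} \<in> C"
  shows "t \<in> {x1,y1,x2,y2}"
  using rf[OF e1 e2 rt] dis r by auto

lemma p2:
  assumes e1: "{x1,y1} \<in> A" and e2: "{x2,y2} \<in> B" and dis: "x1 \<notin> {x2,y2}" "y1 \<notin> {x2,y2}"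
    and rY: "r \<in> Y" and r: "r \<notin> {x1,y1,x2,y2}" and hx: "{r,x1} \<in> C" and hy: "{r,y1} \<in> C"
  shows False
proof -
  have x12: "x1 \<noteq> y1" using eA[OF e1] by simp
  have x22: "x2 \<noteq> y2" using eB[OF e2] by simp
  obtain r1 where r1: "r1 \<in> Y" "r1 \<notin> set [x1,y1,x2,y2,r]" using fresh[of "[x1,y1,x2,y2,r]"] by auto
  obtain r2 where r2: "r2 \<in> Y" "r2 \<notin> set [x1,y1,x2,y2,r,r1]" using fresh[of "[x1,y1,x2,y2,r,r1]"] by auto
  obtain r3 where r3: "r3 \<in> Y" "r3 \<notin> set [x1,y1,x2,y2,r,r1,r2]" using fresh[of "[x1,y1,x2,y2,r,r1,r2]"] by auto
  have nA: "u \<in> {r,x2,y2}" if z: "z \<notin> {x1,y1,x2,y2,r}" and zu: "{z,u} \<in> A" for z u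
  proof -
    have "u \<in> {x2,y2,r,x1}" using rf[OF zu e2 hx] z dis r by auto
    moreover have "u \<in> {x2,y2,r,y1}" using rf[OF zu e2 hy] z dis r by auto
    ultimately show ?thesis using x12 by auto
  qed
  have tA: "\<exists>t\<in>{x2,y2}. {z,t} \<in> A" if zY: "z \<in> Y" and z: "z \<notin> {x1,y1,x2,y2,r}" for z
  proof -
    obtain u w where uw: "u \<noteq> w" "{z,u} \<in> A" "{z,w} \<in> A" using dA[OF zY] by blast
    have "u \<in> {r,x2,y2}" "w \<in> {r,x2,y2}" using nA[OF z uw(2)] nA[OF z uw(3)] by auto
    then show ?thesis using uw by auto
  qed
  obtain t1 where t1: "t1 \<in> {x2,y2}" "{r1,t1} \<in> A" using tA[of r1] r1 by auto
  obtain t2 where t2: "t2 \<in> {x2,y2}" "{r2,t2} \<in> A" using tA[of r2] r2 by auto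
  have nB: "u \<in> {r,t1}" if h: "{r3,u} \<in> B" for u
  proof -
    have "u \<in> {r1,t1,r,x1}" using rf[OF t1(2) h hx] r1 r3 t1(1) r dis by auto
    moreover have "u \<in> {r1,t1,r,y1}" using rf[OF t1(2) h hy] r1 r3 t1(1) r dis by auto
    moreover have "u \<in> {r2,t2,r,x1}" using rf[OF t2(2) h hx] r2 r3 t2(1) r dis by auto
    moreover have "u \<in> {r2,t2,r,y1}" using rf[OF t2(2) h hy] r2 r3 t2(1) r dis by auto
    ultimately show ?thesis using x12 r1 r2 t1(1) t2(1) by auto
  qed
  obtain u w where uw: "u \<noteq> w" "{r3,u} \<in> B" "{r3,w} \<in> B" using dB[OF r3(1)] by blast
  have "u \<in> {r,t1}" "w \<in> {r,t1}" using nB uw by auto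
  then have b1: "{r3,r} \<in> B" using uw by auto
  obtain u' w' where uw': "u' \<noteq> w'" "{r2,u'} \<in> C" "{r2,w'} \<in> C" using dC[OF r2(1)] by blast
  obtain s where s: "{r2,s} \<in> C" "s \<noteq> t1" using uw' by metis
  have sS: "s \<in> {x1,y1,x2,y2}" using p1[OF e1 e2 dis _ s(1)] r2 by auto
  show False using rf[OF t1(2) b1 s(1)] r1 r2 r3 r t1(1) sS s(2) dis by auto
qed


lemma p2':
  assumes e1: "{x1,y1} \<in> A" and e2: "{x2,y2} \<in> B" and dis: "x1 \<notin> {x2,y2}" "y1 \<notin> {x2,y2}"
    and rY: "r \<in> Y" and r: "r \<notin> {x1,y1,x2,y2}" and hx: "{r,x2} \<in> C" and hy: "{r,y2} \<in> C"
  shows False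
  using tri.p2[OF swapAB e2 e1 _ _ rY _ hx hy] dis r by auto

lemma hasC2:
  assumes e1: "{x1,y1} \<in> A" and e2: "{x2,y2} \<in> B" and dis: "x1 \<notin> {x2,y2}" "y1 \<notin> {x2,y2}"
    and rY: "r \<in> Y" and r: "r \<notin> {x1,y1,x2,y2}"
  shows "\<exists>b\<in>{x2,y2}. {r,b} \<in> C"
proof (rule ccontr)
  assume n: "\<not> ?thesis"
  obtain u w where uw: "u \<noteq> w" "{r,u} \<in> C" "{r,w} \<in> C" using dC[OF rY] by blast
  have "u \<in> {x1,y1,x2,y2}" "w \<in> {x1,y1,x2,y2}" using p1[OF e1 e2 dis r] uw by auto
  then have "u \<in> {x1,y1}" "w \<in> {x1,y1}" using n uw by auto
  then have "{r,x1} \<in> C" "{r,y1} \<in> C" using uw by auto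
  then show False using p2[OF e1 e2 dis rY r] by auto
qed

lemma hasC1:
  assumes e1: "{x1,y1} \<in> A" and e2: "{x2,y2} \<in> B" and dis: "x1 \<notin> {x2,y2}" "y1 \<notin> {x2,y2}"
    and rY: "r \<in> Y" and r: "r \<notin> {x1,y1,x2,y2}"
  shows "\<exists>a\<in>{x1,y1}. {r,a} \<in> C"
  using tri.hasC2[OF swapAB e2 e1 _ _ rY] dis r by auto

lemma p4:
  assumes e1: "{x1,y1} \<in> A" and e2: "{x2,y2} \<in> B" and dis: "x1 \<notin> {x2,y2}" "y1 \<notin> {x2,y2}"
    and rY: "r \<in> Y" and r: "r \<notin> {x1,y1,x2,y2}"
    and r'Y: "r' \<in> Y" and r': "r' \<notin> {x1,y1,x2,y2}" and rr: "r \<noteq> r'"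
    and hx: "{r,x1} \<in> C" and hy: "{r',y1} \<in> C"
  shows False
proof -
  have x12: "x1 \<noteq> y1" using eA[OF e1] by simp
  have x22: "x2 \<noteq> y2" using eB[OF e2] by simp
  obtain r2 where r2: "r2 \<in> Y" "r2 \<notin> set [x1,y1,x2,y2,r,r']" using fresh[of "[x1,y1,x2,y2,r,r']"] by auto
  obtain r3 where r3: "r3 \<in> Y" "r3 \<notin> set [x1,y1,x2,y2,r,r',r2]" using fresh[of "[x1,y1,x2,y2,r,r',r2]"] by auto
  have nA: "u \<in> {x2,y2}" if z: "z \<notin> {x1,y1,x2,y2,r,r'}" and zu: "{z,u} \<in> A" for z u
  proof -
    have "u \<in> {x2,y2,r,x1}" using rf[OF zu e2 hx] z dis r by auto
    moreover have "u \<in> {x2,y2,r',y1}" using rf[OF zu e2 hy] z dis r' by auto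
    ultimately show ?thesis using x12 rr r r' by auto
  qed
  have allA: "{z,x2} \<in> A \<and> {z,y2} \<in> A" if zY: "z \<in> Y" and z: "z \<notin> {x1,y1,x2,y2,r,r'}" for z
  proof -
    obtain u w where uw: "u \<noteq> w" "{z,u} \<in> A" "{z,w} \<in> A" using dA[OF zY] by blast
    have "u \<in> {x2,y2}" "w \<in> {x2,y2}" using nA[OF z uw(2)] nA[OF z uw(3)] by auto
    then show ?thesis using uw by auto
  qed
  have a2: "{r2,x2} \<in> A" "{r2,y2} \<in> A" using allA[of r2] r2 by auto
  have a3: "{r3,x2} \<in> A" "{r3,y2} \<in> A" using allA[of r3] r3 by auto
  have nB: "u \<in> {r',y1}" if h: "{r,u} \<in> B" for u
  proof -
    have "u \<in> {r3,y2,r',y1}" using rf[OF a3(2) h hy] r3 r r' rr dis by auto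
    moreover have "u \<in> {r3,x2,r',y1}" using rf[OF a3(1) h hy] r3 r r' rr dis by auto
    moreover have "u \<in> {r2,y2,r',y1}" using rf[OF a2(2) h hy] r2 r r' rr dis by auto
    ultimately show ?thesis using x22 r2 r3 dis by auto
  qed
  obtain u w where uw: "u \<noteq> w" "{r,u} \<in> B" "{r,w} \<in> B" using dB[OF rY] by blast
  have "u \<in> {r',y1}" "w \<in> {r',y1}" using nB uw by auto
  then have b1: "{r,y1} \<in> B" using uw by auto
  obtain \<beta> where be: "\<beta> \<in> {x2,y2}" "{r',\<beta>} \<in> C" using hasC2[OF e1 e2 dis r'Y r'] by auto
  show False
  proof (cases "\<beta> = y2")
    case True
    show False using rf[OF a2(1) b1 be(2)] True r2 r r' rr dis x22 by auto
  next
    case False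
    then have "\<beta> = x2" using be by auto
    then show False using rf[OF a2(2) b1 be(2)] r2 r r' rr dis x22 by auto
  qed
qed

lemma noC1:
  assumes e1: "{x1,y1} \<in> A" and e2: "{x2,y2} \<in> B" and dis: "x1 \<notin> {x2,y2}" "y1 \<notin> {x2,y2}"
    and rY: "r \<in> Y" and r: "r \<notin> {x1,y1,x2,y2}"
    and r'Y: "r' \<in> Y" and r': "r' \<notin> {x1,y1,x2,y2}"
    and pq: "p \<in> {x1,y1}" "q \<in> {x1,y1}" "p \<noteq> q"
    and hp: "{r,p} \<in> C" and hq: "{r',q} \<in> C"
  shows False
proof -
  have e1': "{y1,x1} \<in> A" using e1 by (simp add: insert_commute)
  show False
  proof (cases "r = r'")
    case True
    then show ?thesis using p2[OF e1 e2 dis rY r] pq hp hq by auto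
  next
    case False
    show ?thesis
    proof (cases "p = x1")
      case True
      then have "q = y1" using pq by auto
      then show ?thesis using p4[OF e1 e2 dis rY r r'Y r' False] hp hq True by auto
    next
      case F2: False
      then have "p = y1" "q = x1" using pq by auto
      then show ?thesis using p4[OF e1' e2 _ _ rY _ r'Y _ False] hp hq dis r r' by auto
    qed
  qed
qed

lemma noC2:
  assumes e1: "{x1,y1} \<in> A" and e2: "{x2,y2} \<in> B" and dis: "x1 \<notin> {x2,y2}" "y1 \<notin> {x2,y2}"
    and rY: "r \<in> Y" and r: "r \<notin> {x1,y1,x2,y2}"
    and r'Y: "r' \<in> Y" and r': "r' \<notin> {x1,y1,x2,y2}"
    and pq: "p \<in> {x2,y2}" "q \<in> {x2,y2}" "p \<noteq> q"
    and hp: "{r,p} \<in> C" and hq: "{r',q} \<in> C"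
  shows False
  using tri.noC1[OF swapAB e2 e1 _ _ rY _ r'Y _ pq hp hq] dis r r' by auto

lemma cstruct:
  assumes e1: "{x1,y1} \<in> A" and e2: "{x2,y2} \<in> B" and dis: "x1 \<notin> {x2,y2}" "y1 \<notin> {x2,y2}"
  shows "\<exists>a\<in>{x1,y1}. \<exists>b\<in>{x2,y2}. \<forall>r u. r \<in> Y \<longrightarrow> r \<notin> {x1,y1,x2,y2} \<longrightarrow> {r,u} \<in> C \<longrightarrow> u \<in> {a,b}"
proof -
  obtain r0 where r0: "r0 \<in> Y" "r0 \<notin> set [x1,y1,x2,y2]" using fresh[of "[x1,y1,x2,y2]"] by auto
  then have r0': "r0 \<notin> {x1,y1,x2,y2}" by simp
  obtain a where a: "a \<in> {x1,y1}" "{r0,a} \<in> C" using hasC1[OF e1 e2 dis r0(1) r0'] by auto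
  obtain b where b: "b \<in> {x2,y2}" "{r0,b} \<in> C" using hasC2[OF e1 e2 dis r0(1) r0'] by auto
  have "u \<in> {a,b}" if rY: "r \<in> Y" and r: "r \<notin> {x1,y1,x2,y2}" and ru: "{r,u} \<in> C" for r u
  proof -
    have uS: "u \<in> {x1,y1,x2,y2}" using p1[OF e1 e2 dis r ru] .
    show ?thesis
    proof (cases "u \<in> {x1,y1}")
      case True
      show ?thesis using noC1[OF e1 e2 dis r0(1) r0' rY r a(1) True _ a(2) ru] by auto
    next
      case False
      then have "u \<in> {x2,y2}" using uS by auto
      then show ?thesis using noC2[OF e1 e2 dis r0(1) r0' rY r b(1) _ _ b(2) ru] by auto
    qed
  qed
  then show ?thesis using a(1) b(1) by blast
qed


lemma step0: "\<exists>x1 y1 x2 y2. {x1,y1} \<in> A \<and> {x2,y2} \<in> B \<and> x1 \<notin> {x2,y2} \<and> y1 \<notin> {x2,y2}"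
proof (rule ccontr)
  assume n: "\<not> ?thesis"
  obtain x0 where x0: "x0 \<in> Y" using fresh[of "[]"] by auto
  obtain x y where xy: "{x,y} \<in> A" using dA[OF x0] by blast
  have nb: "{z,x} \<in> B \<and> {z,y} \<in> B" if zY: "z \<in> Y" and z: "z \<notin> {x,y}" for z
  proof -
    obtain u w where uw: "u \<noteq> w" "{z,u} \<in> B" "{z,w} \<in> B" using dB[OF zY] by blast
    have "u \<in> {x,y}" using n xy uw(2) z by blast
    moreover have "w \<in> {x,y}" using n xy uw(3) z by blast
    ultimately show ?thesis using uw by auto
  qed
  obtain z1 where z1: "z1 \<in> Y" "z1 \<notin> set [x,y]" using fresh[of "[x,y]"] by auto
  obtain z2 where z2: "z2 \<in> Y" "z2 \<notin> set [x,y,z1]" using fresh[of "[x,y,z1]"] by auto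
  obtain z3 where z3: "z3 \<in> Y" "z3 \<notin> set [x,y,z1,z2]" using fresh[of "[x,y,z1,z2]"] by auto
  obtain u w where uw: "u \<noteq> w" "{z1,u} \<in> A" "{z1,w} \<in> A" using dA[OF z1(1)] by blast
  have "{z2,x} \<in> B" "{z2,y} \<in> B" "{z3,x} \<in> B" using nb z2 z3 by auto
  show False
  proof (cases "u \<in> {x,y} \<and> w \<in> {x,y}")
    case True
    then have "{z1,x} \<in> A" using uw by auto
    then show False using n \<open>{z2,y} \<in> B\<close> z1 z2 eA[OF xy] by auto
  next
    case False
    then obtain v where v: "{z1,v} \<in> A" "v \<notin> {x,y}" using uw by auto
    show False
    proof (cases "v = z2")
      case True
      then show False using n v \<open>{z3,x} \<in> B\<close> z1 z3 by auto
    next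
      case False
      then show False using n v \<open>{z2,x} \<in> B\<close> z1 z2 eA[OF v(1)] by auto
    qed
  qed
qed

lemma p5:
  assumes ea: "{a,a'} \<in> A" and eb: "{b,b'} \<in> B" and dis: "a \<notin> {b,b'}" "a' \<notin> {b,b'}"
    and hC: "\<And>r. r \<in> Y \<Longrightarrow> r \<notin> {a,a',b,b'} \<Longrightarrow> {r,a} \<in> C \<and> {r,b} \<in> C"
    and wY: "w \<in> Y" and w: "w \<notin> {a,a',b,b'}" and wu: "{w,u} \<in> B"
  shows "u \<in> {a,b}"
proof -
  have aa: "a \<noteq> a'" using eA[OF ea] by simp
  obtain r where r: "r \<in> Y" "r \<notin> set [a,a',b,b',w]" using fresh[of "[a,a',b,b',w]"] by auto
  obtain r' where r': "r' \<in> Y" "r' \<notin> set [a,a',b,b',w,r]" using fresh[of "[a,a',b,b',w,r]"] by auto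
  have cr: "{r,a} \<in> C" "{r,b} \<in> C" using hC r by auto
  have cr': "{r',a} \<in> C" "{r',b} \<in> C" using hC r' by auto
  have cw: "{w,a} \<in> C" using hC wY w by auto
  have "u \<in> {a,a',r,b}" using rf[OF ea wu cr(2)] r w dis by auto
  moreover have "u \<in> {a,a',r',b}" using rf[OF ea wu cr'(2)] r r' w dis by auto
  ultimately have u3: "u \<in> {a,a',b}" using r' by auto
  have "u \<noteq> a'"
  proof
    assume ua: "u = a'"
    have nv: "v \<in> {a,b,b'}" if h: "{r',v} \<in> A" for v
    proof -
      have "v \<in> {b,b',w,a}" using rf[OF h eb cw] r' w dis by auto
      moreover have "v \<in> {b,b',r,a}" using rf[OF h eb cr(1)] r' r dis by auto
      ultimately show ?thesis using r w by auto
    qed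
    obtain v1 v2 where vv: "v1 \<noteq> v2" "{r',v1} \<in> A" "{r',v2} \<in> A" using dA[OF r'(1)] by blast
    obtain v where v: "{r',v} \<in> A" "v \<in> {b,b'}" using vv nv by blast
    show False using rf[OF v(1) wu[unfolded ua] cr(1)] v(2) r r' w dis aa by auto
  qed
  then show ?thesis using u3 by auto
qed

lemma p5A:
  assumes ea: "{a,a'} \<in> A" and eb: "{b,b'} \<in> B" and dis: "a \<notin> {b,b'}" "a' \<notin> {b,b'}"
    and hC: "\<And>r. r \<in> Y \<Longrightarrow> r \<notin> {a,a',b,b'} \<Longrightarrow> {r,a} \<in> C \<and> {r,b} \<in> C"
    and wY: "w \<in> Y" and w: "w \<notin> {a,a',b,b'}" and wu: "{w,u} \<in> A"
  shows "u \<in> {a,b}"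
proof -
  have "u \<in> {b,a}"
  proof (rule tri.p5[OF swapAB eb ea _ _ _ wY _ wu])
    show "b \<notin> {a,a'}" "b' \<notin> {a,a'}" using dis by auto
    show "w \<notin> {b,b',a,a'}" using w by auto
    fix r assume "r \<in> Y" "r \<notin> {b,b',a,a'}"
    then show "{r,b} \<in> C \<and> {r,a} \<in> C" using hC by auto
  qed
  then show ?thesis by auto
qed


lemma main: "\<exists>a\<in>Y. \<exists>b\<in>Y. \<forall>u v. ({u,v} \<in> A \<or> {u,v} \<in> B \<or> {u,v} \<in> C) \<longrightarrow> u \<in> {a,b} \<or> v \<in> {a,b}"
proof -
  obtain x1 y1 x2 y2 where e1: "{x1,y1} \<in> A" and e2: "{x2,y2} \<in> B" and dis: "x1 \<notin> {x2,y2}" "y1 \<notin> {x2,y2}"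
    using step0 by blast
  obtain a b where ab: "a \<in> {x1,y1}" "b \<in> {x2,y2}"
    and cs: "\<And>r u. r \<in> Y \<Longrightarrow> r \<notin> {x1,y1,x2,y2} \<Longrightarrow> {r,u} \<in> C \<Longrightarrow> u \<in> {a,b}"
    using cstruct[OF e1 e2 dis] by blast
  obtain a' where a': "{a,a'} = {x1,y1}" using ab(1) by (auto simp: insert_commute)
  obtain b' where b': "{b,b'} = {x2,y2}" using ab(2) by (auto simp: insert_commute)
  have ea: "{a,a'} \<in> A" using e1 a' by simp
  have eb: "{b,b'} \<in> B" using e2 b' by simp
  have S: "{a,a',b,b'} = {x1,y1,x2,y2}" using a' b' by auto
  have dis': "a \<notin> {b,b'}" "a' \<notin> {b,b'}" using dis a' b' by auto
  have aa: "a \<noteq> a'" using eA[OF ea] by simp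
  have bb: "b \<noteq> b'" using eB[OF eb] by simp
  have hC: "{r,a} \<in> C \<and> {r,b} \<in> C" if rY: "r \<in> Y" and r: "r \<notin> {a,a',b,b'}" for r
  proof -
    obtain u w where uw: "u \<noteq> w" "{r,u} \<in> C" "{r,w} \<in> C" using dC[OF rY] by blast
    have "u \<in> {a,b}" "w \<in> {a,b}" using cs[OF rY _ uw(2)] cs[OF rY _ uw(3)] r S by auto
    then show ?thesis using uw by auto
  qed
  have nC: "u \<in> {a,b}" if "r \<in> Y" "r \<notin> {a,a',b,b'}" "{r,u} \<in> C" for r u
    using cs that S by auto
  have nB: "u \<in> {a,b}" if "r \<in> Y" "r \<notin> {a,a',b,b'}" "{r,u} \<in> B" for r u
    using p5[OF ea eb dis' hC] that by blast
  have nA: "u \<in> {a,b}" if "r \<in> Y" "r \<notin> {a,a',b,b'}" "{r,u} \<in> A" for r u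
    using p5A[OF ea eb dis' hC] that by blast
  have fB: "{r,a} \<in> B \<and> {r,b} \<in> B" if rY: "r \<in> Y" and r: "r \<notin> {a,a',b,b'}" for r
  proof -
    obtain u w where uw: "u \<noteq> w" "{r,u} \<in> B" "{r,w} \<in> B" using dB[OF rY] by blast
    have "u \<in> {a,b}" "w \<in> {a,b}" using nB[OF rY r uw(2)] nB[OF rY r uw(3)] by auto
    then show ?thesis using uw by auto
  qed
  have fA: "{r,a} \<in> A \<and> {r,b} \<in> A" if rY: "r \<in> Y" and r: "r \<notin> {a,a',b,b'}" for r
  proof -
    obtain u w where uw: "u \<noteq> w" "{r,u} \<in> A" "{r,w} \<in> A" using dA[OF rY] by blast
    have "u \<in> {a,b}" "w \<in> {a,b}" using nA[OF rY r uw(2)] nA[OF rY r uw(3)] by auto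
    then show ?thesis using uw by auto
  qed
  obtain w1 where w1: "w1 \<in> Y" "w1 \<notin> set [a,a',b,b']" using fresh[of "[a,a',b,b']"] by auto
  obtain w2 where w2: "w2 \<in> Y" "w2 \<notin> set [a,a',b,b',w1]" using fresh[of "[a,a',b,b',w1]"] by auto
  have A1: "{w1,a} \<in> A" using fA w1 by auto
  have B1: "{w1,a} \<in> B" using fB w1 by auto
  have B2: "{w2,b} \<in> B" using fB w2 by auto
  have C2: "{w2,b} \<in> C" using hC w2 by auto
  have key: "u \<in> {a,b} \<or> v \<in> {a,b}" if uvY: "u \<in> Y" "v \<in> Y" and uv: "u \<noteq> v"
    and nbr: "\<And>r z. r \<in> Y \<Longrightarrow> r \<notin> {a,a',b,b'} \<Longrightarrow> {r,z} \<in> G \<Longrightarrow> z \<in> {a,b}"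
    and huv: "{u,v} \<in> G" and no: "{a',b'} \<in> G \<Longrightarrow> False" for u v G
  proof (rule ccontr)
    assume c: "\<not> (u \<in> {a,b} \<or> v \<in> {a,b})"
    have huv': "{v,u} \<in> G" using huv by (simp add: insert_commute)
    have "u \<in> {a,a',b,b'}" using nbr[OF uvY(1) _ huv] c by blast
    moreover have "v \<in> {a,a',b,b'}" using nbr[OF uvY(2) _ huv'] c by blast
    ultimately have "{u,v} = {a',b'}" using c uv by auto
    then show False using no huv by simp
  qed
  show ?thesis
  proof (intro bexI allI impI)
    fix u v assume h: "{u,v} \<in> A \<or> {u,v} \<in> B \<or> {u,v} \<in> C"
    then consider (a) "{u,v} \<in> A" | (b) "{u,v} \<in> B" | (c) "{u,v} \<in> C" by blast
    then show "u \<in> {a,b} \<or> v \<in> {a,b}"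
    proof cases
      case a
      show ?thesis
      proof (rule key[OF _ _ _ nA a])
        show "u \<in> Y" "v \<in> Y" "u \<noteq> v" using eA[OF a] by auto
        assume h': "{a',b'} \<in> A"
        show False using rf[OF h' B1 C2] w1 w2 dis' aa bb by auto
      qed
    next
      case b
      show ?thesis
      proof (rule key[OF _ _ _ nB b])
        show "u \<in> Y" "v \<in> Y" "u \<noteq> v" using eB[OF b] by auto
        assume h': "{a',b'} \<in> B"
        show False using rf[OF A1 h' C2] w1 w2 dis' aa bb by auto
      qed
    next
      case c
      show ?thesis
      proof (rule key[OF _ _ _ nC c])
        show "u \<in> Y" "v \<in> Y" "u \<noteq> v" using eC[OF c] by auto
        assume h': "{a',b'} \<in> C"
        show False using rf[OF A1 B2 h'] w1 w2 dis' aa bb by auto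
      qed
    qed
  next
    show "a \<in> Y" using eA[OF ea] by simp
    show "b \<in> Y" using eB[OF eb] by simp
  qed
qed

end

lemma two_elems: "2 \<le> card S \<Longrightarrow> \<exists>x y. x \<in> S \<and> y \<in> S \<and> x \<noteq> y"
proof (rule ccontr)
  assume h: "2 \<le> card S" "\<not> (\<exists>x y. x \<in> S \<and> y \<in> S \<and> x \<noteq> y)"
  then have "S \<noteq> {}" by auto
  then obtain x where "x \<in> S" by auto
  then have "S = {x}" using h(2) by auto
  then show False using h(1) by simp
qed

lemma graph_edge: "graph_on Y G \<Longrightarrow> {u,v} \<in> G \<Longrightarrow> u \<noteq> v \<and> u \<in> Y \<and> v \<in> Y"
proof -
  assume g: "graph_on Y G" and e: "{u,v} \<in> G"
  then have "card {u,v} = 2" "{u,v} \<subseteq> Y" unfolding graph_on_def by auto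
  then show ?thesis by (cases "u = v") auto
qed

lemma graph_deg: "graph_on Y G \<Longrightarrow> min_degree_ge Y G 2 \<Longrightarrow> v \<in> Y \<Longrightarrow> \<exists>u w. u \<noteq> w \<and> {v,u} \<in> G \<and> {v,w} \<in> G"
proof -
  assume g: "graph_on Y G" and m: "min_degree_ge Y G 2" and v: "v \<in> Y"
  have "2 \<le> card {e\<in>G. v \<in> e}" using m v unfolding min_degree_ge_def degree_def by auto
  then obtain e e' where ee: "e \<in> G" "v \<in> e" "e' \<in> G" "v \<in> e'" "e \<noteq> e'" using two_elems by blast
  have form: "\<exists>u. f = {v,u}" if "f \<in> G" "v \<in> f" for f
  proof -
    have "card f = 2" using g that unfolding graph_on_def by auto
    then obtain x y where "f = {x,y}" "x \<noteq> y" by (auto simp: card_2_iff)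
    then show ?thesis using that(2) by (auto simp: insert_commute)
  qed
  obtain u where u: "e = {v,u}" using form ee by blast
  obtain w where w: "e' = {v,w}" using form ee by blast
  show ?thesis using u w ee by auto
qed

theorem mainTheorem14:
  fixes Y :: "'a set" and G1 G2 G3 :: "'a set set"
  assumes "finite Y" and "card Y \<ge> 8"
    and "graph_on Y G1" and "graph_on Y G2" and "graph_on Y G3"
    and "min_degree_ge Y G1 2" and "min_degree_ge Y G2 2" and "min_degree_ge Y G3 2"
    and "\<not> (\<exists>e1\<in>G1. \<exists>e2\<in>G2. \<exists>e3\<in>G3.
              e1 \<inter> e2 = {} \<and> e1 \<inter> e3 = {} \<and> e2 \<inter> e3 = {})"
  shows "\<exists>a\<in>Y. \<exists>b\<in>Y. \<forall>e \<in> G1 \<union> G2 \<union> G3. a \<in> e \<or> b \<in> e"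
proof -
  have t: "tri Y G1 G2 G3"
  proof
    show "finite Y" "8 \<le> card Y" using assms(1,2) by auto
    show "\<And>u v. {u,v} \<in> G1 \<Longrightarrow> u \<noteq> v \<and> u \<in> Y \<and> v \<in> Y" using graph_edge[OF assms(3)] by blast
    show "\<And>u v. {u,v} \<in> G2 \<Longrightarrow> u \<noteq> v \<and> u \<in> Y \<and> v \<in> Y" using graph_edge[OF assms(4)] by blast
    show "\<And>u v. {u,v} \<in> G3 \<Longrightarrow> u \<noteq> v \<and> u \<in> Y \<and> v \<in> Y" using graph_edge[OF assms(5)] by blast
    show "\<And>v. v \<in> Y \<Longrightarrow> \<exists>u w. u \<noteq> w \<and> {v,u} \<in> G1 \<and> {v,w} \<in> G1" using graph_deg[OF assms(3,6)] by blast
    show "\<And>v. v \<in> Y \<Longrightarrow> \<exists>u w. u \<noteq> w \<and> {v,u} \<in> G2 \<and> {v,w} \<in> G2" using graph_deg[OF assms(4,7)] by blast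
    show "\<And>v. v \<in> Y \<Longrightarrow> \<exists>u w. u \<noteq> w \<and> {v,u} \<in> G3 \<and> {v,w} \<in> G3" using graph_deg[OF assms(5,8)] by blast
    fix a b c d p q assume h: "{a,b} \<in> G1" "{c,d} \<in> G2" "{p,q} \<in> G3"
    show "a \<in> {c,d,p,q} \<or> b \<in> {c,d,p,q} \<or> c \<in> {p,q} \<or> d \<in> {p,q}"
    proof (rule ccontr)
      assume "\<not> ?thesis"
      then have "{a,b} \<inter> {c,d} = {} \<and> {a,b} \<inter> {p,q} = {} \<and> {c,d} \<inter> {p,q} = {}" by auto
      then show False using assms(9) h by blast
    qed
  qed
  obtain a b where ab: "a \<in> Y" "b \<in> Y"
    and cov: "\<And>u v. {u,v} \<in> G1 \<or> {u,v} \<in> G2 \<or> {u,v} \<in> G3 \<Longrightarrow> u \<in> {a,b} \<or> v \<in> {a,b}"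
    using tri.main[OF t] by blast
  have "a \<in> e \<or> b \<in> e" if e: "e \<in> G1 \<union> G2 \<union> G3" for e
  proof -
    have "card e = 2" using e assms(3,4,5) unfolding graph_on_def by auto
    then obtain x y where xy: "e = {x,y}" by (auto simp: card_2_iff)
    then have "x \<in> {a,b} \<or> y \<in> {a,b}" using cov[of x y] e by auto
    then show ?thesis using xy by auto
  qed
  then show ?thesis using ab by blast
qed

end
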